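(* Consider a D2D caching network with $K$ users each of cache size $M$ files, of which $S$ are selfish, a library of $N$ files, and $\frac{M(K-S)}{N}>1$, using the random caching scheme described in the context. Then every request vector $(\mathsf{r}_1,\dots,\mathsf{r}_K)$ is recoverable by the users if all library files are encoded with an MDS code of rate $r$, where $r\in(0,1)$ is a real positive root of the polynomial $$\sum_{i=0}^{K-S-1}\binom{K-S}{i}\Big(-\frac{M}{N}\Big)^{K-S-i}r^{K-S-1-i}+1 .$$
   Context: Selfish users cache content like all other users but never transmit; all users receive all transmissions. Random caching scheme: each of the $N$ library files of $B$ bits is divided into $I$ subfiles of $B/I$ bits, each regarded as a symbol of $\mathbb{F}_{2^{B/I}}$, and each file is encoded with an $(I, I/r)$ MDS code over $\mathbb{F}_{2^{B/I}}$ (codeword length $I/r$; any $I$ encoded symbols recover the file). Each user independently, for each file, selects uniformly at random $MI/N$ of the $I/r$ encoded-symbol indices and caches those symbols, so a given encoded symbol is cached by a given user with probability $Mr/N$. At the end of the delivery phase each user knows every encoded symbol of its requested file that is cached by itself or by at least one non-selfish user; the number of encoded symbols of a file cached exclusively by a given set $\mathcal{P}$ of users is taken to be its typical value $(\frac{Mr}{N})^{|\mathcal{P}|}(1-\frac{Mr}{N})^{K-|\mathcal{P}|}\frac{I}{r}$ (law of large numbers, large $I$). A file is recoverable by a user if the user knows at least $I$ of its encoded symbols. *)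

theory Defs
  imports Complex_Main
begin

text \<open>Users are 0,...,K-1; Sel is the set of selfish users. Each encoded symbol of a
file is cached by a given user with probability p = M r / N. Typical-value model:
the number of encoded symbols of a file cached exclusively by the set P of users is
p^|P| (1-p)^(K-|P|) (I/r).\<close>

definition cache_prob :: "nat \<Rightarrow> nat \<Rightarrow> real \<Rightarrow> real" where
  "cache_prob M N r = real M * r / real N"

definition excl_count :: "nat \<Rightarrow> nat \<Rightarrow> nat \<Rightarrow> nat \<Rightarrow> real \<Rightarrow> nat set \<Rightarrow> real" where
  "excl_count K M N I r P =
     cache_prob M N r ^ card P * (1 - cache_prob M N r) ^ (K - card P) * (real I / r)"

text \<open>Number of encoded symbols of file f known by user u at the end of delivery:
those cached by u itself or by at least one non-selfish user (by symmetry of the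
caching scheme this does not depend on f).\<close>
definition known_symbols ::
  "nat \<Rightarrow> nat set \<Rightarrow> nat \<Rightarrow> nat \<Rightarrow> nat \<Rightarrow> real \<Rightarrow> nat \<Rightarrow> nat \<Rightarrow> real" where
  "known_symbols K Sel M N I r u f =
     (\<Sum>P\<in>{P. P \<subseteq> {..<K} \<and> (u \<in> P \<or> P \<inter> ({..<K} - Sel) \<noteq> {})}. excl_count K M N I r P)"

definition recoverable ::
  "nat \<Rightarrow> nat set \<Rightarrow> nat \<Rightarrow> nat \<Rightarrow> nat \<Rightarrow> real \<Rightarrow> (nat \<Rightarrow> nat) \<Rightarrow> bool" where
  "recoverable K Sel M N I r d = (\<forall>u<K. known_symbols K Sel M N I r u (d u) \<ge> real I)"

end

theory Submission
  imports Defs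
begin

lemma pow_sum_binom:
  fixes p q :: real
  assumes "finite C" "card C \<le> K"
  shows "(\<Sum>P\<in>Pow C. p ^ card P * q ^ (K - card P)) = (p + q) ^ card C * q ^ (K - card C)"
proof -
  have "(p + q) ^ card C = (\<Prod>x\<in>C. p + q)" by simp
  also have "\<dots> = (\<Sum>X\<in>Pow C. (\<Prod>x\<in>X. p) * (\<Prod>x\<in>C-X. q))"
    by (rule prod_add[OF assms(1)])
  also have "\<dots> = (\<Sum>X\<in>Pow C. p ^ card X * q ^ (card C - card X))"
    by (rule sum.cong) (auto simp: card_Diff_subset finite_subset[OF _ assms(1)])
  finally have e: "(p + q) ^ card C = (\<Sum>X\<in>Pow C. p ^ card X * q ^ (card C - card X))" .
  have "(\<Sum>P\<in>Pow C. p ^ card P * q ^ (K - card P))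
      = (\<Sum>P\<in>Pow C. p ^ card P * q ^ (card C - card P) * q ^ (K - card C))"
  proof (rule sum.cong)
    fix P assume "P \<in> Pow C"
    hence "card P \<le> card C" using assms(1) by (simp add: card_mono)
    hence "K - card P = (card C - card P) + (K - card C)" using assms(2) by simp
    thus "p ^ card P * q ^ (K - card P) = p ^ card P * q ^ (card C - card P) * q ^ (K - card C)"
      by (simp add: power_add)
  qed simp
  also have "\<dots> = (p + q) ^ card C * q ^ (K - card C)"
    unfolding e by (simp add: sum_distrib_right)
  finally show ?thesis .
qed

lemma known_eq:
  assumes "Sel \<subseteq> {..<K}" "u < K"
  defines "C \<equiv> Sel - {u}"
  shows "known_symbols K Sel M N I r u f
     = (1 - (1 - cache_prob M N r) ^ (K - card C)) * (real I / r)"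
proof -
  let ?p = "cache_prob M N r"
  let ?g = "\<lambda>P. ?p ^ card P * (1 - ?p) ^ (K - card P)"
  have fin: "finite C" "C \<subseteq> {..<K}" using assms(1) unfolding C_def
    by (auto intro: finite_subset)
  have cC: "card C \<le> K" using card_mono[OF _ fin(2)] by simp
  have set: "{P. P \<subseteq> {..<K} \<and> (u \<in> P \<or> P \<inter> ({..<K} - Sel) \<noteq> {})} = Pow {..<K} - Pow C"
    using assms(1,2) unfolding C_def by blast
  have "(\<Sum>P\<in>Pow {..<K} - Pow C. ?g P) = (\<Sum>P\<in>Pow {..<K}. ?g P) - (\<Sum>P\<in>Pow C. ?g P)"
    by (rule sum_diff) (use fin in auto)
  also have "\<dots> = 1 - (1 - ?p) ^ (K - card C)"
    using pow_sum_binom[of "{..<K}" K ?p "1 - ?p"] pow_sum_binom[OF fin(1) cC, of ?p "1 - ?p"]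
    by simp
  finally have "(\<Sum>P\<in>Pow {..<K} - Pow C. ?g P) = 1 - (1 - ?p) ^ (K - card C)" .
  hence "(\<Sum>P\<in>Pow {..<K} - Pow C. ?g P * (real I / r)) = (1 - (1 - ?p) ^ (K - card C)) * (real I / r)"
    by (simp only: sum_distrib_right[symmetric])
  thus ?thesis
    unfolding known_symbols_def excl_count_def set .
qed

theorem theorem3:
  fixes K S M N I :: nat and Sel :: "nat set" and r :: real
  assumes "Sel \<subseteq> {..<K}" and "card Sel = S"
    and "M \<le> N"
    and "real M * real (K - S) / real N > 1"
    and "0 < r" and "r < 1"
    and "(\<Sum>i = 0..<K - S. real ((K - S) choose i) * (- (real M / real N)) ^ (K - S - i)
            * r ^ (K - S - 1 - i)) + 1 = 0"
  shows "\<forall>d. (\<forall>u<K. d u < N) \<longrightarrow> recoverable K Sel M N I r d"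
proof -
  define n where "n = K - S"
  define p where "p = cache_prob M N r"
  have Npos: "N > 0" using assms(4) by (cases "N = 0") auto
  have npos: "n > 0" using assms(4) unfolding n_def by (cases "K - S = 0") auto
  have p0: "0 \<le> p" unfolding p_def cache_prob_def using assms(5) by simp
  have p1: "p \<le> 1" unfolding p_def cache_prob_def using assms(3,5,6) Npos
  proof -
    have "real M * r \<le> real N * 1"
      using assms(3,5,6) by (intro mult_mono) auto
    thus "real M * r / real N \<le> 1" using Npos by (simp add: divide_le_eq)
  qed
  have binom: "(1 - p) ^ n = (\<Sum>k\<le>n. real (n choose k) * (- p) ^ (n - k))"
    using binomial_ring[of 1 "- p" n] by simp
  have "(\<Sum>k\<le>n. real (n choose k) * (- p) ^ (n - k))
      = (\<Sum>k<n. real (n choose k) * (- p) ^ (n - k)) + 1"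
    by (simp add: lessThan_Suc_atMost[symmetric])
  also have "(\<Sum>k<n. real (n choose k) * (- p) ^ (n - k))
      = r * (\<Sum>i = 0..<n. real (n choose i) * (- (real M / real N)) ^ (n - i) * r ^ (n - 1 - i))"
    unfolding sum_distrib_left atLeast0LessThan
  proof (rule sum.cong)
    fix i assume "i \<in> {..<n}"
    hence i: "n - i = Suc (n - 1 - i)" by auto
    show "real (n choose i) * (- p) ^ (n - i)
        = r * (real (n choose i) * (- (real M / real N)) ^ (n - i) * r ^ (n - 1 - i))"
      unfolding p_def cache_prob_def i
      by (simp add: power_mult_distrib[symmetric] field_simps)
  qed simp
  also have "\<dots> = r * (-1)"
  proof -
    have "(\<Sum>i = 0..<n. real (n choose i) * (- (real M / real N)) ^ (n - i) * r ^ (n - 1 - i)) = -1"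
      using assms(7) unfolding n_def by linarith
    thus ?thesis by simp
  qed
  finally have key: "1 - (1 - p) ^ n = r" using binom by simp
  show ?thesis
  proof (intro allI impI)
    fix d :: "nat \<Rightarrow> nat" assume "\<forall>u<K. d u < N"
    show "recoverable K Sel M N I r d" unfolding recoverable_def
    proof (intro allI impI)
      fix u assume u: "u < K"
      have fS: "finite Sel" using assms(1) by (auto intro: finite_subset)
      have "1 - (1 - p) ^ n \<le> 1 - (1 - p) ^ (K - card (Sel - {u}))"
      proof (cases "u \<in> Sel")
        case True
        have "card (Sel - {u}) = S - 1" using True fS assms(2) by simp
        moreover have "S \<ge> 1" using True fS assms(2) by (metis card_0_eq empty_iff less_one not_le)
        moreover have "S \<le> K" using assms(1,2) card_mono[of "{..<K}" Sel] by simp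
        ultimately have "K - card (Sel - {u}) = Suc n" unfolding n_def by simp
        moreover have "(1 - p) ^ Suc n \<le> (1 - p) ^ n"
          using p0 p1 by (simp add: mult_left_le_one_le)
        ultimately show ?thesis by simp
      next
        case False
        thus ?thesis unfolding n_def using assms(2) by simp
      qed
      hence "r \<le> 1 - (1 - p) ^ (K - card (Sel - {u}))" using key by simp
      hence "r * (real I / r) \<le> (1 - (1 - p) ^ (K - card (Sel - {u}))) * (real I / r)"
        using assms(5) by (intro mult_right_mono) auto
      thus "real I \<le> known_symbols K Sel M N I r u (d u)"
        unfolding known_eq[OF assms(1) u] p_def[symmetric] using assms(5) by simp
    qed
  qed
qed

end
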